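(* Let $G\sim\mathrm{SBM}(n;C,P)$ with communities $V_1,\dots,V_c$, let $\mathbf{k}=(\mathbf{k}_1,\dots,\mathbf{k}_c)\in\mathbb{N}_0^c$ with $\mathbf{k}_\ell\le|V_\ell|$, and let $R$ consist of $\mathbf{k}_\ell$ vertices of $V_\ell$ for each $\ell$, chosen independently of the edges of $G$ (e.g. fixed, or uniformly at random within each community). Let $W$ be the number of unordered pairs of distinct rows of $\mathbf{A}^*$ that coincide on all columns in $R$. Then $$\mathbb{P}(R\text{ does not resolve }\mathbf{A}^* )=\mathbb{P}(W>0)\le\mathbb{E}(W)\le f(\mathbf{k}):=\sum_{1\le i\le j\le c}s(i,j)\prod_{\ell=1}^c r(i,j,\ell)^{\mathbf{k}_\ell},$$ where $s(i,i):=\binom{|V_i|}{2}$, $s(i,j):=|V_i||V_j|$ for $i\ne j$, and $r(i,j,\ell):=P(i,\ell)P(j,\ell)+(1-P(i,\ell))(1-P(j,\ell))$. Moreover $f$ is nonincreasing with respect to the componentwise order on $\mathbb{N}_0^c$, and whenever $R$ resolves $\mathbf{A}^*$ it is a resolving set of $G$.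
   Context: Stochastic Block Model: $G\sim\mathrm{SBM}(n;C,P)$, for a partition $C=\{V_1,\dots,V_c\}$ of $V=\{1,\dots,n\}$ and a symmetric $c\times c$ matrix $P$ with entries in $[0,1]$, is the random simple undirected graph on $V$ in which, independently for each pair of distinct vertices $u\in V_i$, $v\in V_j$, the edge $\{u,v\}$ is present with probability $P(i,j)$. $\mathbf{A}^*$ is the adjacency matrix of $G$ with every diagonal entry replaced by $2$. A set $R$ of columns resolves a matrix if its rows restricted to the columns of $R$ are pairwise distinct; a set $R$ of vertices resolves $G$ if every vertex is uniquely determined by its vector of shortest-path distances to the vertices of $R$. *)

theory Defs
  imports "HOL-Probability.Probability"
begin

(* Vertex set V = {0..<n}.  The partition C = {V_0,...,V_{c-1}} is given by a
   community map comm : vertex -> {0..<c}; V_l = {v < n. comm v = l}.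
   A graph on V is encoded by its edge indicator X on unordered pairs {u,v}. *)

definition community :: "nat \<Rightarrow> (nat \<Rightarrow> nat) \<Rightarrow> nat \<Rightarrow> nat set" where
  "community n comm l = {v. v < n \<and> comm v = l}"

definition vpairs :: "nat \<Rightarrow> nat set set" where
  "vpairs n = {{u, v} | u v. u < n \<and> v < n \<and> u \<noteq> v}"

definition sbm :: "nat \<Rightarrow> (nat \<Rightarrow> nat) \<Rightarrow> (nat \<Rightarrow> nat \<Rightarrow> real) \<Rightarrow> (nat set \<Rightarrow> bool) pmf" where
  "sbm n comm P = Pi_pmf (vpairs n) False
      (\<lambda>e. bernoulli_pmf (P (comm (Min e)) (comm (Max e))))"

definition Astar :: "(nat set \<Rightarrow> bool) \<Rightarrow> nat \<Rightarrow> nat \<Rightarrow> nat" where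
  "Astar X u v = (if u = v then 2 else if X {u, v} then 1 else 0)"

definition resolves_matrix :: "nat \<Rightarrow> (nat set \<Rightarrow> bool) \<Rightarrow> nat set \<Rightarrow> bool" where
  "resolves_matrix n X R \<longleftrightarrow>
     (\<forall>u v. u < n \<longrightarrow> v < n \<longrightarrow> u \<noteq> v \<longrightarrow> (\<exists>r\<in>R. Astar X u r \<noteq> Astar X v r))"

definition W :: "nat \<Rightarrow> nat set \<Rightarrow> (nat set \<Rightarrow> bool) \<Rightarrow> nat" where
  "W n R X = card {{u, v} | u v. u < n \<and> v < n \<and> u \<noteq> v \<and>
                              (\<forall>r\<in>R. Astar X u r = Astar X v r)}"

definition edge_rel :: "nat \<Rightarrow> (nat set \<Rightarrow> bool) \<Rightarrow> (nat \<times> nat) set" where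
  "edge_rel n X = {(u, v). u < n \<and> v < n \<and> u \<noteq> v \<and> X {u, v}}"

(* shortest-path distance, \<infinity> if no path *)
definition gdist :: "nat \<Rightarrow> (nat set \<Rightarrow> bool) \<Rightarrow> nat \<Rightarrow> nat \<Rightarrow> enat" where
  "gdist n X u v = (INF m \<in> {m. (u, v) \<in> (edge_rel n X) ^^ m}. enat m)"

definition resolves_graph :: "nat \<Rightarrow> (nat set \<Rightarrow> bool) \<Rightarrow> nat set \<Rightarrow> bool" where
  "resolves_graph n X R \<longleftrightarrow>
     (\<forall>u v. u < n \<longrightarrow> v < n \<longrightarrow> u \<noteq> v \<longrightarrow> (\<exists>r\<in>R. gdist n X u r \<noteq> gdist n X v r))"

definition s_fun :: "nat \<Rightarrow> (nat \<Rightarrow> nat) \<Rightarrow> nat \<Rightarrow> nat \<Rightarrow> real" where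
  "s_fun n comm i j = (if i = j then real (card (community n comm i) choose 2)
                       else real (card (community n comm i)) * real (card (community n comm j)))"

definition r_fun :: "(nat \<Rightarrow> nat \<Rightarrow> real) \<Rightarrow> nat \<Rightarrow> nat \<Rightarrow> nat \<Rightarrow> real" where
  "r_fun P i j l = P i l * P j l + (1 - P i l) * (1 - P j l)"

definition f_bound :: "nat \<Rightarrow> (nat \<Rightarrow> nat) \<Rightarrow> nat \<Rightarrow> (nat \<Rightarrow> nat \<Rightarrow> real) \<Rightarrow> (nat \<Rightarrow> nat) \<Rightarrow> real" where
  "f_bound n comm c P k =
     (\<Sum>(i, j) \<in> {(i, j). i \<le> j \<and> j < c}. s_fun n comm i j * (\<Prod>l<c. r_fun P i j l ^ k l))"

definition admissible :: "nat \<Rightarrow> (nat \<Rightarrow> nat) \<Rightarrow> nat \<Rightarrow> (nat \<Rightarrow> nat) \<Rightarrow> nat set \<Rightarrow> bool" where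
  "admissible n comm c k R \<longleftrightarrow> R \<subseteq> {0..<n} \<and>
     (\<forall>l<c. card (R \<inter> community n comm l) = k l)"

end

theory Submission
  imports Defs
begin


lemma nn_integral_Pi_pmf_pairs:
  fixes h :: "'r \<Rightarrow> 'b \<Rightarrow> 'b \<Rightarrow> ennreal"
  assumes "finite R" "finite A" "inj_on a R" "inj_on b R" "a ` R \<subseteq> A" "b ` R \<subseteq> A"
    "a ` R \<inter> b ` R = {}"
  shows "(\<integral>\<^sup>+X. (\<Prod>r\<in>R. h r (X (a r)) (X (b r))) \<partial>Pi_pmf A dflt p)
         = (\<Prod>r\<in>R. \<integral>\<^sup>+x. \<integral>\<^sup>+y. h r x y \<partial>p (b r) \<partial>p (a r))"
  using assms
proof (induction R arbitrary: A rule: finite_induct)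
  case empty
  then show ?case by simp
next
  case (insert r R)
  define A' where "A' = A - {a r, b r}"
  have abr: "a r \<noteq> b r" using insert.prems(6) by blast
  have anb: "a r' \<noteq> b r''" if "r' \<in> insert r R" "r'' \<in> insert r R" for r' r''
    using insert.prems(6) that by blast
  have aR: "a ` R \<subseteq> A'"
  proof
    fix x assume "x \<in> a ` R"
    then obtain r' where r': "r' \<in> R" "x = a r'" by blast
    have "r' \<noteq> r" using r' insert.hyps(2) by blast
    then have "a r' \<noteq> a r" using inj_onD[OF insert.prems(2), of r' r] r'(1) by blast
    moreover have "a r' \<noteq> b r" using anb r'(1) by blast
    moreover have "a r' \<in> A" using insert.prems(4) r'(1) by blast
    ultimately show "x \<in> A'" using r'(2) by (simp add: A'_def)
  qed
  have bR: "b ` R \<subseteq> A'"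
  proof
    fix x assume "x \<in> b ` R"
    then obtain r' where r': "r' \<in> R" "x = b r'" by blast
    have "r' \<noteq> r" using r' insert.hyps(2) by blast
    then have "b r' \<noteq> b r" using inj_onD[OF insert.prems(3), of r' r] r'(1) by blast
    moreover have "a r \<noteq> b r'" using anb r'(1) by blast
    moreover have "b r' \<in> A" using insert.prems(5) r'(1) by blast
    ultimately show "x \<in> A'" using r'(2) by (simp add: A'_def)
  qed
  have finA': "finite A'" using insert.prems(1) by (simp add: A'_def)
  have A: "A = insert (a r) (insert (b r) A')" using insert.prems(4,5) by (auto simp: A'_def)
  have IH: "(\<integral>\<^sup>+X. (\<Prod>r\<in>R. h r (X (a r)) (X (b r))) \<partial>Pi_pmf A' dflt p)
         = (\<Prod>r\<in>R. \<integral>\<^sup>+x. \<integral>\<^sup>+y. h r x y \<partial>p (b r) \<partial>p (a r))"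
  proof (rule insert.IH[OF finA'])
    show "inj_on a R" using insert.prems(2) by (rule inj_on_subset) blast
    show "inj_on b R" using insert.prems(3) by (rule inj_on_subset) blast
    show "a ` R \<subseteq> A'" by (rule aR)
    show "b ` R \<subseteq> A'" by (rule bR)
    show "a ` R \<inter> b ` R = {}" using insert.prems(6) by blast
  qed
  have nar: "a r' \<noteq> a r" "a r' \<noteq> b r" "b r' \<noteq> a r" "b r' \<noteq> b r" if "r' \<in> R" for r'
    using that aR bR unfolding A'_def by blast+
  have eq: "(\<Prod>r'\<in>insert r R. h r' (((g(b r := z))(a r := y)) (a r')) (((g(b r := z))(a r := y)) (b r')))
      = h r y z * (\<Prod>r'\<in>R. h r' (g (a r')) (g (b r')))" for g y z
  proof -
    have "(\<Prod>r'\<in>R. h r' (((g(b r := z))(a r := y)) (a r')) (((g(b r := z))(a r := y)) (b r')))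
        = (\<Prod>r'\<in>R. h r' (g (a r')) (g (b r')))"
      by (intro prod.cong refl) (use nar in auto)
    then show ?thesis using insert.hyps abr by simp
  qed
  have "(\<integral>\<^sup>+X. (\<Prod>r'\<in>insert r R. h r' (X (a r')) (X (b r'))) \<partial>Pi_pmf A dflt p)
     = (\<integral>\<^sup>+y. \<integral>\<^sup>+z. \<integral>\<^sup>+g. (\<Prod>r'\<in>insert r R. h r' (((g(b r := z))(a r := y)) (a r')) (((g(b r := z))(a r := y)) (b r'))) \<partial>Pi_pmf A' dflt p \<partial>p (b r) \<partial>p (a r))"
  proof -
    have n1: "a r \<notin> insert (b r) A'" using abr by (auto simp: A'_def)
    have n2: "b r \<notin> A'" by (auto simp: A'_def)
    show ?thesis
      unfolding A Pi_pmf_insert[OF finite_insert[THEN iffD2, OF finA'] n1] Pi_pmf_insert[OF finA' n2]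
      by (simp only: nn_integral_map_pmf nn_integral_pair_pmf' case_prod_conv)
  qed
  also have "\<dots> = (\<integral>\<^sup>+y. \<integral>\<^sup>+z. h r y z * (\<integral>\<^sup>+g. (\<Prod>r'\<in>R. h r' (g (a r')) (g (b r'))) \<partial>Pi_pmf A' dflt p) \<partial>p (b r) \<partial>p (a r))"
    by (simp only: eq) (simp add: nn_integral_cmult)
  also have "\<dots> = (\<integral>\<^sup>+y. \<integral>\<^sup>+z. h r y z \<partial>p (b r) \<partial>p (a r)) * (\<integral>\<^sup>+g. (\<Prod>r'\<in>R. h r' (g (a r')) (g (b r'))) \<partial>Pi_pmf A' dflt p)"
    by (simp add: nn_integral_multc)
  also have "\<dots> = (\<Prod>r\<in>insert r R. \<integral>\<^sup>+x. \<integral>\<^sup>+y. h r x y \<partial>p (b r) \<partial>p (a r))"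
    using IH insert.hyps by simp
  finally show ?case .
qed



lemma relpow_0_mem: "(u, v) \<in> E ^^ 0 \<longleftrightarrow> u = v" by auto

lemma gdist_self: "gdist n X u u = 0"
proof -
  have "0 \<in> {m. (u, u) \<in> edge_rel n X ^^ m}" by simp
  then have "gdist n X u u \<le> enat 0" unfolding gdist_def by (rule INF_lower)
  then show ?thesis by (metis zero_enat_def le_zero_eq)
qed

lemma gdist_ge: 
  assumes "\<And>m. (u, v) \<in> edge_rel n X ^^ m \<Longrightarrow> d \<le> m"
  shows "enat d \<le> gdist n X u v"
  unfolding gdist_def by (rule INF_greatest) (use assms in auto)

lemma gdist_ne0: "u \<noteq> v \<Longrightarrow> gdist n X u v \<noteq> 0"
proof -
  assume "u \<noteq> v"
  then have "enat 1 \<le> gdist n X u v"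
    by (intro gdist_ge) (case_tac m; auto)
  then show ?thesis by (auto simp: one_enat_def zero_enat_def)
qed

lemma gdist_adj: "u < n \<Longrightarrow> v < n \<Longrightarrow> u \<noteq> v \<Longrightarrow> X {u, v} \<Longrightarrow> gdist n X u v = 1"
proof -
  assume a: "u < n" "v < n" "u \<noteq> v" "X {u, v}"
  have "1 \<in> {m. (u, v) \<in> edge_rel n X ^^ m}" using a by (simp add: edge_rel_def)
  then have "gdist n X u v \<le> enat 1" unfolding gdist_def by (rule INF_lower)
  moreover have "enat 1 \<le> gdist n X u v"
    using a(3) by (intro gdist_ge) (case_tac m; auto)
  ultimately show ?thesis by (simp add: one_enat_def)
qed

lemma gdist_nonadj: "u \<noteq> v \<Longrightarrow> \<not> X {u, v} \<Longrightarrow> gdist n X u v \<noteq> 1"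
proof -
  assume a: "u \<noteq> v" "\<not> X {u, v}"
  have "enat 2 \<le> gdist n X u v"
  proof (intro gdist_ge)
    fix m assume m: "(u, v) \<in> edge_rel n X ^^ m"
    show "2 \<le> m"
    proof (rule ccontr)
      assume "\<not> 2 \<le> m"
      then have "m = 0 \<or> m = 1" by auto
      then show False using m a by (auto simp: edge_rel_def)
    qed
  qed
  then show ?thesis by (auto simp: one_enat_def)
qed

lemma resolves_part:
  assumes "R \<subseteq> {0..<n}" "resolves_matrix n X R"
  shows "resolves_graph n X R"
  unfolding resolves_graph_def
proof (intro allI impI)
  fix u v assume uv: "u < n" "v < n" "u \<noteq> v"
  then obtain r where r: "r \<in> R" "Astar X u r \<noteq> Astar X v r"
    using assms(2) unfolding resolves_matrix_def by blast
  have rn: "r < n" using r assms(1) by auto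
  show "\<exists>r\<in>R. gdist n X u r \<noteq> gdist n X v r"
  proof (intro bexI[OF _ r(1)])
    consider "u = r" | "v = r" | "u \<noteq> r" "v \<noteq> r" by blast
    then show "gdist n X u r \<noteq> gdist n X v r"
    proof cases
      case 1 then show ?thesis using uv gdist_self gdist_ne0 by metis
    next
      case 2 then show ?thesis using uv gdist_self gdist_ne0 by metis
    next
      case 3
      then have "X {u, r} \<noteq> X {v, r}" using r(2) by (auto simp: Astar_def split: if_splits)
      then show ?thesis using 3 uv rn gdist_adj gdist_nonadj by metis
    qed
  qed
qed

lemma r_fun_bounds:
  fixes p q :: real
  assumes "0 \<le> p" "p \<le> 1" "0 \<le> q" "q \<le> 1"
  shows "0 \<le> p * q + (1 - p) * (1 - q)" "p * q + (1 - p) * (1 - q) \<le> 1"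
proof -
  show "0 \<le> p * q + (1 - p) * (1 - q)" using assms by (intro add_nonneg_nonneg mult_nonneg_nonneg) auto
  have "0 \<le> p * (1 - q) + q * (1 - p)" using assms by (intro add_nonneg_nonneg mult_nonneg_nonneg) auto
  then show "p * q + (1 - p) * (1 - q) \<le> 1" by (simp add: algebra_simps)
qed

lemma mono_part:
  assumes P_range: "\<forall>i<c. \<forall>j<c. 0 \<le> P i j \<and> P i j \<le> 1"
    and le: "\<forall>l<c. k1 l \<le> k2 l"
  shows "f_bound n comm c P k2 \<le> f_bound n comm c P k1"
  unfolding f_bound_def
proof (intro sum_mono, clarify)
  fix i j assume ij: "i \<le> j" "j < c"
  have s: "0 \<le> s_fun n comm i j" by (simp add: s_fun_def)
  have "(\<Prod>l<c. r_fun P i j l ^ k2 l) \<le> (\<Prod>l<c. r_fun P i j l ^ k1 l)"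
  proof (intro prod_mono conjI)
    fix l assume "l \<in> {..<c}"
    then have "0 \<le> r_fun P i j l" "r_fun P i j l \<le> 1"
      using r_fun_bounds[of "P i l" "P j l"] P_range ij by (auto simp: r_fun_def)
    then show "0 \<le> r_fun P i j l ^ k2 l" "r_fun P i j l ^ k2 l \<le> r_fun P i j l ^ k1 l"
      using le \<open>l \<in> {..<c}\<close> by (auto intro: power_decreasing)
  qed
  then show "s_fun n comm i j * (\<Prod>l<c. r_fun P i j l ^ k2 l) \<le> s_fun n comm i j * (\<Prod>l<c. r_fun P i j l ^ k1 l)"
    using s by (rule mult_left_mono)
qed



definition Pairs :: "nat \<Rightarrow> (nat \<times> nat) set" where
  "Pairs n = {(u, v). u < v \<and> v < n}"

definition agree :: "(nat set \<Rightarrow> bool) \<Rightarrow> nat set \<Rightarrow> nat \<Rightarrow> nat \<Rightarrow> bool" where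
  "agree X R u v \<longleftrightarrow> (\<forall>r\<in>R. Astar X u r = Astar X v r)"

lemma finite_Pairs: "finite (Pairs n)"
  by (rule finite_subset[of _ "{..<n} \<times> {..<n}"]) (auto simp: Pairs_def)

lemma W_set_eq:
  "{{u, v} |u v. u < n \<and> v < n \<and> u \<noteq> v \<and> (\<forall>r\<in>R. Astar X u r = Astar X v r)}
   = (\<lambda>(u, v). {u, v}) ` {p \<in> Pairs n. agree X R (fst p) (snd p)}"
proof (intro equalityI subsetI)
  fix e assume "e \<in> {{u, v} |u v. u < n \<and> v < n \<and> u \<noteq> v \<and> (\<forall>r\<in>R. Astar X u r = Astar X v r)}"
  then obtain u v where e: "e = {u, v}" "u < n" "v < n" "u \<noteq> v" "\<forall>r\<in>R. Astar X u r = Astar X v r"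
    by blast
  show "e \<in> (\<lambda>(u, v). {u, v}) ` {p \<in> Pairs n. agree X R (fst p) (snd p)}"
  proof (cases "u < v")
    case True
    then show ?thesis using e by (intro image_eqI[of _ _ "(u, v)"]) (auto simp: Pairs_def agree_def)
  next
    case False
    then show ?thesis using e by (intro image_eqI[of _ _ "(v, u)"]) (auto simp: Pairs_def agree_def)
  qed
next
  fix e assume "e \<in> (\<lambda>(u, v). {u, v}) ` {p \<in> Pairs n. agree X R (fst p) (snd p)}"
  then obtain a b where ab: "e = {a, b}" "a < b" "b < n" "agree X R a b" by (auto simp: Pairs_def)
  then have "a < n" "a \<noteq> b" "\<forall>r\<in>R. Astar X a r = Astar X b r" by (auto simp: agree_def)
  then show "e \<in> {{u, v} |u v. u < n \<and> v < n \<and> u \<noteq> v \<and> (\<forall>r\<in>R. Astar X u r = Astar X v r)}"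
    using ab by blast
qed

lemma W_eq: "real (W n R X) = (\<Sum>p\<in>Pairs n. if agree X R (fst p) (snd p) then 1 else 0)"
proof -
  have inj: "inj_on (\<lambda>(u, v). {u, v}) {p \<in> Pairs n. agree X R (fst p) (snd p)}"
    by (auto simp: inj_on_def Pairs_def doubleton_eq_iff)
  have "W n R X = card {p \<in> Pairs n. agree X R (fst p) (snd p)}"
    unfolding W_def W_set_eq using card_image[OF inj] by simp
  also have "real \<dots> = (\<Sum>p\<in>{p \<in> Pairs n. agree X R (fst p) (snd p)}. 1)" by simp
  also have "\<dots> = (\<Sum>p\<in>Pairs n. if agree X R (fst p) (snd p) then 1 else 0)"
    using finite_Pairs by (rule sum.inter_filter)
  finally show ?thesis .
qed

lemma finite_W_set: "finite {{u, v} |u v. u < (n::nat) \<and> v < n \<and> u \<noteq> v \<and> Q u v}"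
  by (rule finite_subset[of _ "Pow {..<n}"]) auto

lemma W_pos_iff: "W n R X > 0 \<longleftrightarrow> \<not> resolves_matrix n X R"
  unfolding W_def resolves_matrix_def
  by (subst card_gt_0_iff) (use finite_W_set in auto)

lemma prod_if_ennreal: "finite R \<Longrightarrow> (\<Prod>r\<in>R. if Q r then 1 else 0 :: ennreal) = (if \<forall>r\<in>R. Q r then 1 else 0)"
  by (induction R rule: finite_induct) auto

lemma prod_group_comm:
  fixes g :: "nat \<Rightarrow> real"
  assumes "finite R" "\<forall>r\<in>R. comm r < c"
  shows "(\<Prod>r\<in>R. g (comm r)) = (\<Prod>l<c. g l ^ card {r\<in>R. comm r = l})"
proof -
  have "(\<Prod>r\<in>R. g (comm r)) = (\<Prod>l<c. \<Prod>r\<in>{r\<in>R. comm r = l}. g (comm r))"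
    using assms by (intro prod.group[symmetric]) auto
  also have "\<dots> = (\<Prod>l<c. g l ^ card {r\<in>R. comm r = l})"
    by (intro prod.cong refl) simp
  finally show ?thesis .
qed

lemma pair_bound:
  assumes comm_range: "\<forall>v<n. comm v < c"
    and P_sym: "\<forall>i<c. \<forall>j<c. P i j = P j i"
    and P_range: "\<forall>i<c. \<forall>j<c. 0 \<le> P i j \<and> P i j \<le> 1"
    and adm: "admissible n comm c k R"
    and uv: "u < v" "v < n"
  shows "(\<integral>\<^sup>+X. ennreal (if agree X R u v then 1 else 0) \<partial>sbm n comm P)
          \<le> ennreal (\<Prod>l<c. r_fun P (comm u) (comm v) l ^ k l)"
proof (cases "u \<in> R \<or> v \<in> R")
  case True
  have "\<not> agree X R u v" for X
    using True uv by (auto simp: agree_def Astar_def)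
  then show ?thesis by simp
next
  case False
  have Rn: "R \<subseteq> {0..<n}" using adm by (simp add: admissible_def)
  have finR: "finite R" using Rn finite_subset by blast
  define pe where "pe = (\<lambda>e. bernoulli_pmf (P (comm (Min e)) (comm (Max e))))"
  have sbm: "sbm n comm P = Pi_pmf (vpairs n) False pe" by (simp add: sbm_def pe_def)
  have ag: "(if agree X R u v then 1 else 0 :: ennreal)
      = (\<Prod>r\<in>R. (\<lambda>r x y. if x = y then 1 else 0) r (X ({u, r})) (X ({v, r})))" for X
  proof -
    have "agree X R u v \<longleftrightarrow> (\<forall>r\<in>R. X {u, r} = X {v, r})"
      using False by (auto simp: agree_def Astar_def split: if_splits)
    then show ?thesis by (simp add: prod_if_ennreal[OF finR])
  qed
  have finV: "finite (vpairs n)"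
    by (rule finite_subset[of _ "Pow {..<n}"]) (auto simp: vpairs_def)
  have "(\<integral>\<^sup>+X. ennreal (if agree X R u v then 1 else 0) \<partial>sbm n comm P)
      = (\<integral>\<^sup>+X. (\<Prod>r\<in>R. (\<lambda>r x y. if x = y then 1 else 0) r (X ({u, r})) (X ({v, r}))) \<partial>Pi_pmf (vpairs n) False pe)"
    unfolding sbm by (intro nn_integral_cong) (simp add: ag[symmetric])
  also have "\<dots> = (\<Prod>r\<in>R. \<integral>\<^sup>+x. \<integral>\<^sup>+y. (if x = y then 1 else 0) \<partial>pe {v, r} \<partial>pe {u, r})"
  proof (rule nn_integral_Pi_pmf_pairs[OF finR finV])
    show "inj_on (\<lambda>r. {u, r}) R" using False by (auto simp: inj_on_def doubleton_eq_iff)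
    show "inj_on (\<lambda>r. {v, r}) R" using False by (auto simp: inj_on_def doubleton_eq_iff)
    show "(\<lambda>r. {u, r}) ` R \<subseteq> vpairs n"
    proof
      fix e assume "e \<in> (\<lambda>r. {u, r}) ` R"
      then obtain r where er: "e = {u, r}" "r \<in> R" by auto
      then have "r < n" "u \<noteq> r" "u < n" using Rn False uv by auto
      then show "e \<in> vpairs n" using er unfolding vpairs_def by blast
    qed
    show "(\<lambda>r. {v, r}) ` R \<subseteq> vpairs n"
    proof
      fix e assume "e \<in> (\<lambda>r. {v, r}) ` R"
      then obtain r where er: "e = {v, r}" "r \<in> R" by auto
      then have "r < n" "v \<noteq> r" "v < n" using Rn False uv by auto
      then show "e \<in> vpairs n" using er unfolding vpairs_def by blast
    qed
    show "(\<lambda>r. {u, r}) ` R \<inter> (\<lambda>r. {v, r}) ` R = {}" using False uv by (auto simp: doubleton_eq_iff)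
  qed
  also have "\<dots> = (\<Prod>r\<in>R. ennreal (r_fun P (comm u) (comm v) (comm r)))"
  proof (intro prod.cong refl)
    fix r assume r: "r \<in> R"
    have rn: "r < n" using r Rn by auto
    have cu: "comm u < c" "comm v < c" "comm r < c" using comm_range uv rn by auto
    have pu: "pe {u, r} = bernoulli_pmf (P (comm u) (comm r))"
      using P_sym cu by (cases "u \<le> r") (auto simp: pe_def min_def max_def)
    have pv: "pe {v, r} = bernoulli_pmf (P (comm v) (comm r))"
      using P_sym cu by (cases "v \<le> r") (auto simp: pe_def min_def max_def)
    define a where "a = P (comm u) (comm r)"
    define b where "b = P (comm v) (comm r)"
    have ab: "0 \<le> a" "a \<le> 1" "0 \<le> b" "b \<le> 1" using P_range cu by (auto simp: a_def b_def)
    have "(\<integral>\<^sup>+x. \<integral>\<^sup>+y. (if x = y then 1 else 0 :: ennreal) \<partial>bernoulli_pmf b \<partial>bernoulli_pmf a)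
        = ennreal a * ennreal b + ennreal (1 - a) * ennreal (1 - b)"
      using ab by (simp add: mult.commute)
    also have "\<dots> = ennreal (a * b + (1 - a) * (1 - b))"
      using ab by (simp add: ennreal_mult ennreal_plus)
    finally show "(\<integral>\<^sup>+x. \<integral>\<^sup>+y. (if x = y then 1 else 0) \<partial>pe {v, r} \<partial>pe {u, r})
        = ennreal (r_fun P (comm u) (comm v) (comm r))"
      unfolding pu pv r_fun_def a_def b_def .
  qed
  also have "\<dots> = ennreal (\<Prod>r\<in>R. r_fun P (comm u) (comm v) (comm r))"
  proof (rule prod_ennreal)
    fix r assume r: "r \<in> R"
    have cu: "comm u < c" "comm v < c" "comm r < c" using comm_range uv r Rn by auto
    then show "0 \<le> r_fun P (comm u) (comm v) (comm r)"
      using r_fun_bounds(1)[of "P (comm u) (comm r)" "P (comm v) (comm r)"] P_range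
      by (auto simp: r_fun_def)
  qed
  also have "(\<Prod>r\<in>R. r_fun P (comm u) (comm v) (comm r)) = (\<Prod>l<c. r_fun P (comm u) (comm v) l ^ k l)"
  proof -
    have "(\<Prod>r\<in>R. r_fun P (comm u) (comm v) (comm r))
        = (\<Prod>l<c. r_fun P (comm u) (comm v) l ^ card {r\<in>R. comm r = l})"
      using finR Rn comm_range by (intro prod_group_comm) auto
    also have "\<dots> = (\<Prod>l<c. r_fun P (comm u) (comm v) l ^ k l)"
    proof (intro prod.cong refl)
      fix l assume "l \<in> {..<c}"
      then have "card (R \<inter> community n comm l) = k l" using adm by (simp add: admissible_def)
      moreover have "R \<inter> community n comm l = {r\<in>R. comm r = l}" using Rn by (auto simp: community_def)
      ultimately show "r_fun P (comm u) (comm v) l ^ card {r\<in>R. comm r = l} = r_fun P (comm u) (comm v) l ^ k l"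
        by simp
    qed
    finally show ?thesis .
  qed
  finally show ?thesis by simp
qed



definition keyp :: "(nat \<Rightarrow> nat) \<Rightarrow> nat \<times> nat \<Rightarrow> nat \<times> nat" where
  "keyp comm p = (min (comm (fst p)) (comm (snd p)), max (comm (fst p)) (comm (snd p)))"

lemma card_key_lt:
  assumes "i < j"
  shows "card {p \<in> Pairs n. keyp comm p = (i, j)} = card (community n comm i) * card (community n comm j)"
proof -
  let ?f = "\<lambda>(x, y). (min x y, max x y :: nat)"
  have fin: "finite (community n comm i \<times> community n comm j)"
    by (auto simp: community_def)
  have eq: "{p \<in> Pairs n. keyp comm p = (i, j)} = ?f ` (community n comm i \<times> community n comm j)"
  proof (intro equalityI subsetI)
    fix p assume p: "p \<in> {p \<in> Pairs n. keyp comm p = (i, j)}"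
    obtain u v where uv: "p = (u, v)" by (cases p)
    have h: "u < v" "v < n" "min (comm u) (comm v) = i" "max (comm u) (comm v) = j"
      using p uv by (auto simp: Pairs_def keyp_def)
    show "p \<in> ?f ` (community n comm i \<times> community n comm j)"
    proof (cases "comm u \<le> comm v")
      case True
      then show ?thesis using h uv by (intro image_eqI[of _ _ "(u, v)"]) (auto simp: community_def)
    next
      case False
      then show ?thesis using h uv by (intro image_eqI[of _ _ "(v, u)"]) (auto simp: community_def)
    qed
  next
    fix p assume "p \<in> ?f ` (community n comm i \<times> community n comm j)"
    then obtain x y where xy: "p = ?f (x, y)" "x < n" "comm x = i" "y < n" "comm y = j"
      by (auto simp: community_def)
    have "x \<noteq> y" using xy assms by auto
    then show "p \<in> {p \<in> Pairs n. keyp comm p = (i, j)}"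
      using xy assms by (auto simp: Pairs_def keyp_def min_def max_def)
  qed
  have mm: "{min x y, max x y} = {x, y}" for x y :: nat by (cases "x \<le> y") (simp_all add: min_def max_def insert_commute)
  have inj: "inj_on ?f (community n comm i \<times> community n comm j)"
  proof (rule inj_onI)
    fix p q assume p: "p \<in> community n comm i \<times> community n comm j"
      and q: "q \<in> community n comm i \<times> community n comm j" and fpq: "?f p = ?f q"
    obtain x y where xy: "p = (x, y)" by (cases p)
    obtain x' y' where xy': "q = (x', y')" by (cases q)
    have c: "comm x = i" "comm y = j" "comm x' = i" "comm y' = j"
      using p q xy xy' by (auto simp: community_def)
    have "{min x y, max x y} = {min x' y', max x' y'}" using fpq xy xy' by simp
    then have "{x, y} = {x', y'}" by (simp only: mm)
    then have "x = x' \<and> y = y' \<or> x = y' \<and> y = x'" by (simp add: doubleton_eq_iff)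
    moreover have "\<not> (x = y' \<and> y = x')" using c assms by auto
    ultimately show "p = q" using xy xy' by simp
  qed
  show ?thesis unfolding eq card_image[OF inj] card_cartesian_product ..
qed

lemma card_key_eq:
  "card {p \<in> Pairs n. keyp comm p = (i, i)} = card (community n comm i) choose 2"
proof -
  let ?V = "community n comm i"
  let ?f = "\<lambda>(x, y). {x, y :: nat}"
  have finV: "finite ?V" by (auto simp: community_def)
  have eq: "{B. B \<subseteq> ?V \<and> card B = 2} = ?f ` {p \<in> Pairs n. keyp comm p = (i, i)}"
  proof (intro equalityI subsetI)
    fix B assume "B \<in> {B. B \<subseteq> ?V \<and> card B = 2}"
    then obtain x y where B: "B = {x, y}" "x \<noteq> y" "B \<subseteq> ?V" by (auto simp: card_2_iff)
    show "B \<in> ?f ` {p \<in> Pairs n. keyp comm p = (i, i)}"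
    proof (cases "x < y")
      case True
      then show ?thesis using B by (intro image_eqI[of _ _ "(x, y)"]) (auto simp: Pairs_def keyp_def community_def)
    next
      case False
      then show ?thesis using B by (intro image_eqI[of _ _ "(y, x)"]) (auto simp: Pairs_def keyp_def community_def)
    qed
  next
    fix B assume "B \<in> ?f ` {p \<in> Pairs n. keyp comm p = (i, i)}"
    then obtain x y where "B = {x, y}" "x < y" "y < n" "min (comm x) (comm y) = i" "max (comm x) (comm y) = i"
      by (auto simp: Pairs_def keyp_def)
    then show "B \<in> {B. B \<subseteq> ?V \<and> card B = 2}"
      by (auto simp: community_def min_def max_def split: if_splits)
  qed
  have inj: "inj_on ?f {p \<in> Pairs n. keyp comm p = (i, i)}"
    by (auto simp: inj_on_def Pairs_def doubleton_eq_iff)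
  have "card {p \<in> Pairs n. keyp comm p = (i, i)} = card {B. B \<subseteq> ?V \<and> card B = 2}"
    unfolding eq card_image[OF inj] ..
  also have "\<dots> = card ?V choose 2" by (rule n_subsets[OF finV])
  finally show ?thesis .
qed

lemma group_f_bound:
  assumes comm_range: "\<forall>v<n. comm v < c"
  shows "(\<Sum>p\<in>Pairs n. \<Prod>l<c. r_fun P (comm (fst p)) (comm (snd p)) l ^ k l) = f_bound n comm c P k"
proof -
  let ?T = "{(i, j). i \<le> j \<and> j < c}"
  let ?G = "\<lambda>i j. \<Prod>l<c. r_fun P i j l ^ k l"
  have Gsym: "?G i j = ?G j i" for i j by (simp add: r_fun_def mult.commute)
  have finT: "finite ?T" by (rule finite_subset[of _ "{..<c} \<times> {..<c}"]) auto
  have img: "keyp comm ` Pairs n \<subseteq> ?T" using comm_range by (auto simp: Pairs_def keyp_def)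
  have "(\<Sum>p\<in>Pairs n. ?G (comm (fst p)) (comm (snd p)))
      = (\<Sum>y\<in>?T. \<Sum>p\<in>{p. p \<in> Pairs n \<and> keyp comm p = y}. ?G (comm (fst p)) (comm (snd p)))"
    by (rule sum.group[OF finite_Pairs finT img, symmetric])
  also have "\<dots> = (\<Sum>y\<in>?T. s_fun n comm (fst y) (snd y) * ?G (fst y) (snd y))"
  proof (intro sum.cong refl)
    fix y assume y: "y \<in> ?T"
    obtain i j where ij: "y = (i, j)" "i \<le> j" using y by auto
    have "(\<Sum>p\<in>{p. p \<in> Pairs n \<and> keyp comm p = y}. ?G (comm (fst p)) (comm (snd p)))
        = (\<Sum>p\<in>{p. p \<in> Pairs n \<and> keyp comm p = y}. ?G i j)"
    proof (intro sum.cong refl)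
      fix p assume "p \<in> {p. p \<in> Pairs n \<and> keyp comm p = y}"
      then have "min (comm (fst p)) (comm (snd p)) = i" "max (comm (fst p)) (comm (snd p)) = j"
        using ij by (auto simp: keyp_def)
      then show "?G (comm (fst p)) (comm (snd p)) = ?G i j"
        using Gsym by (cases "comm (fst p) \<le> comm (snd p)") (auto simp: min_def max_def)
    qed
    also have "\<dots> = real (card {p \<in> Pairs n. keyp comm p = (i, j)}) * ?G i j"
      using ij by simp
    also have "\<dots> = s_fun n comm i j * ?G i j"
    proof (cases "i = j")
      case True
      then show ?thesis using card_key_eq by (simp add: s_fun_def)
    next
      case False
      then show ?thesis using card_key_lt[of i j] ij by (simp add: s_fun_def)
    qed
    finally show "(\<Sum>p\<in>{p. p \<in> Pairs n \<and> keyp comm p = y}. ?G (comm (fst p)) (comm (snd p)))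
        = s_fun n comm (fst y) (snd y) * ?G (fst y) (snd y)" using ij by simp
  qed
  also have "\<dots> = f_bound n comm c P k"
    unfolding f_bound_def by (simp add: case_prod_unfold)
  finally show ?thesis .
qed



lemma inner_bound:
  assumes comm_range: "\<forall>v<n. comm v < c"
    and P_sym: "\<forall>i<c. \<forall>j<c. P i j = P j i"
    and P_range: "\<forall>i<c. \<forall>j<c. 0 \<le> P i j \<and> P i j \<le> 1"
    and adm: "admissible n comm c k R"
  shows "(\<integral>\<^sup>+X. ennreal (real (W n R X)) \<partial>sbm n comm P) \<le> ennreal (f_bound n comm c P k)"
proof -
  let ?G = "\<lambda>p. \<Prod>l<c. r_fun P (comm (fst p)) (comm (snd p)) l ^ k l"
  have Gnn: "0 \<le> ?G p" if "p \<in> Pairs n" for p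
  proof (intro prod_nonneg zero_le_power)
    fix l assume "l \<in> {..<c}"
    moreover have "comm (fst p) < c" "comm (snd p) < c" using that comm_range by (auto simp: Pairs_def)
    ultimately show "0 \<le> r_fun P (comm (fst p)) (comm (snd p)) l"
      using r_fun_bounds(1)[of "P (comm (fst p)) l" "P (comm (snd p)) l"] P_range by (auto simp: r_fun_def)
  qed
  have "(\<integral>\<^sup>+X. ennreal (real (W n R X)) \<partial>sbm n comm P)
      = (\<integral>\<^sup>+X. (\<Sum>p\<in>Pairs n. ennreal (if agree X R (fst p) (snd p) then 1 else 0)) \<partial>sbm n comm P)"
    by (intro nn_integral_cong) (simp add: W_eq)
  also have "\<dots> = (\<Sum>p\<in>Pairs n. \<integral>\<^sup>+X. ennreal (if agree X R (fst p) (snd p) then 1 else 0) \<partial>sbm n comm P)"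
    by (rule nn_integral_sum) simp
  also have "\<dots> \<le> (\<Sum>p\<in>Pairs n. ennreal (?G p))"
  proof (rule sum_mono)
    fix p assume "p \<in> Pairs n"
    then show "(\<integral>\<^sup>+X. ennreal (if agree X R (fst p) (snd p) then 1 else 0) \<partial>sbm n comm P) \<le> ennreal (?G p)"
      using pair_bound[OF comm_range P_sym P_range adm] by (auto simp: Pairs_def)
  qed
  also have "\<dots> = ennreal (\<Sum>p\<in>Pairs n. ?G p)" using Gnn by simp
  also have "\<dots> = ennreal (f_bound n comm c P k)" using group_f_bound[OF comm_range] by simp
  finally show ?thesis .
qed

theorem mainTheorem9:
  fixes n c :: nat and comm :: "nat \<Rightarrow> nat" and P :: "nat \<Rightarrow> nat \<Rightarrow> real"
    and k :: "nat \<Rightarrow> nat" and Rdist :: "nat set pmf"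
  assumes comm_range: "\<forall>v<n. comm v < c"
    and P_sym: "\<forall>i<c. \<forall>j<c. P i j = P j i"
    and P_range: "\<forall>i<c. \<forall>j<c. 0 \<le> P i j \<and> P i j \<le> 1"
    and k_le: "\<forall>l<c. k l \<le> card (community n comm l)"
    and R_adm: "\<forall>R\<in>set_pmf Rdist. admissible n comm c k R"
  defines "J \<equiv> pair_pmf Rdist (sbm n comm P)"
  shows "measure_pmf.prob J {(R, X). \<not> resolves_matrix n X R}
           = measure_pmf.prob J {(R, X). W n R X > 0}
       \<and> measure_pmf.prob J {(R, X). W n R X > 0}
           \<le> measure_pmf.expectation J (\<lambda>(R, X). real (W n R X))
       \<and> measure_pmf.expectation J (\<lambda>(R, X). real (W n R X)) \<le> f_bound n comm c P k
       \<and> (\<forall>k1 k2 :: nat \<Rightarrow> nat. (\<forall>l<c. k1 l \<le> k2 l) \<longrightarrow>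
            f_bound n comm c P k2 \<le> f_bound n comm c P k1)
       \<and> (\<forall>R X. R \<subseteq> {0..<n} \<longrightarrow> resolves_matrix n X R \<longrightarrow> resolves_graph n X R)"
proof (intro conjI)
  have finR: "finite (set_pmf Rdist)"
    by (rule finite_subset[of _ "Pow {0..<n}"]) (use R_adm in \<open>auto simp: admissible_def\<close>)
  have finV: "finite (vpairs n)"
    by (rule finite_subset[of _ "Pow {..<n}"]) (auto simp: vpairs_def)
  have finS: "finite (set_pmf (sbm n comm P))"
    unfolding sbm_def
    by (rule finite_subset[OF set_Pi_pmf_subset'[OF finV]]) (intro finite_PiE_dflt finV, simp)
  have finJ: "finite (set_pmf J)" unfolding J_def using finR finS by simp
  have int: "integrable (measure_pmf J) f" for f :: "nat set \<times> (nat set \<Rightarrow> bool) \<Rightarrow> real"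
    using finJ by (rule integrable_measure_pmf_finite)
  show "measure_pmf.prob J {(R, X). \<not> resolves_matrix n X R} = measure_pmf.prob J {(R, X). W n R X > 0}"
    using W_pos_iff by metis
  show "measure_pmf.prob J {(R, X). W n R X > 0} \<le> measure_pmf.expectation J (\<lambda>(R, X). real (W n R X))"
  proof -
    have "measure_pmf.prob J {(R, X). W n R X > 0} = measure_pmf.expectation J (indicator {(R, X). W n R X > 0})"
      by simp
    also have "\<dots> \<le> measure_pmf.expectation J (\<lambda>(R, X). real (W n R X))"
      by (intro integral_mono int) (auto simp: indicator_def)
    finally show ?thesis .
  qed
  show "measure_pmf.expectation J (\<lambda>(R, X). real (W n R X)) \<le> f_bound n comm c P k"
  proof -
    have Fnn: "0 \<le> f_bound n comm c P k"
      unfolding f_bound_def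
    proof (intro sum_nonneg, clarify)
      fix i j assume ij: "i \<le> j" "j < c"
      have r: "0 \<le> r_fun P i j l" if l: "l \<in> {..<c}" for l
        using r_fun_bounds(1)[of "P i l" "P j l"] P_range ij l by (auto simp: r_fun_def)
      have "0 \<le> s_fun n comm i j" by (simp add: s_fun_def)
      then show "0 \<le> s_fun n comm i j * (\<Prod>l<c. r_fun P i j l ^ k l)"
        using r by (intro mult_nonneg_nonneg prod_nonneg zero_le_power) auto
    qed
    have Enn: "0 \<le> measure_pmf.expectation J (\<lambda>(R, X). real (W n R X))"
      by (intro integral_nonneg_AE) (auto simp: case_prod_unfold)
    have "ennreal (measure_pmf.expectation J (\<lambda>(R, X). real (W n R X)))
        = (\<integral>\<^sup>+x. ennreal ((\<lambda>(R, X). real (W n R X)) x) \<partial>J)"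
      by (rule nn_integral_eq_integral[symmetric]) (auto intro: int simp: case_prod_unfold)
    also have "\<dots> = (\<integral>\<^sup>+R. \<integral>\<^sup>+X. ennreal (real (W n R X)) \<partial>sbm n comm P \<partial>Rdist)"
      unfolding J_def nn_integral_pair_pmf' by simp
    also have "\<dots> \<le> (\<integral>\<^sup>+R. ennreal (f_bound n comm c P k) \<partial>Rdist)"
      by (intro nn_integral_mono_AE AE_pmfI inner_bound[OF comm_range P_sym P_range] R_adm[rule_format])
    also have "\<dots> = ennreal (f_bound n comm c P k)" by simp
    finally show ?thesis using Fnn Enn by (simp add: ennreal_le_iff)
  qed
  show "\<forall>k1 k2 :: nat \<Rightarrow> nat. (\<forall>l<c. k1 l \<le> k2 l) \<longrightarrow> f_bound n comm c P k2 \<le> f_bound n comm c P k1"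
    using mono_part[OF P_range] by blast
  show "\<forall>R X. R \<subseteq> {0..<n} \<longrightarrow> resolves_matrix n X R \<longrightarrow> resolves_graph n X R"
    using resolves_part by blast
qed

end
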